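(* Let $a<b$, $n\ge1$, and let $I_n: a=x_0<x_1<\cdots<x_n=b$ be the uniform partition with $x_{i+1}-x_i=h=\frac{b-a}{n}$ for $i=0,\dots,n-1$. Let $f:[a,b]\rightarrow\mathbb{R}$ be an absolutely continuous mapping with $f'\in L^2[a,b]$, and let $\sigma(f')=\|f'\|_2^2-\frac{(f(b)-f(a))^2}{b-a}$. Define \[ S(f,I_n)=\frac{h}{2}\sum_{i=0}^{n-1}\left[f\left(\frac{3x_i+x_{i+1}}{4}\right)+f\left(\frac{x_i+3x_{i+1}}{4}\right)\right] \] and $R(f,I_n)=\int_a^b f(x)\,dx-S(f,I_n)$. Then \[ |R(f,I_n)|\leq \frac{(b-a)^{3/2}}{4\sqrt{3}\,n} \sqrt{\sigma(f')}. \]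
   Context: $\|g\|_2=\left(\int_a^b g(t)^2\,dt\right)^{1/2}$. *)

theory Defs
  imports "HOL-Analysis.Analysis"
begin

definition abs_cont_on :: "(real \<Rightarrow> real) \<Rightarrow> real \<Rightarrow> real \<Rightarrow> bool" where
  "abs_cont_on f a b \<longleftrightarrow>
     (\<forall>e>0. \<exists>d>0. \<forall>(m::nat) (u::nat \<Rightarrow> real) (v::nat \<Rightarrow> real).
        (\<forall>k<m. a \<le> u k \<and> u k \<le> v k \<and> v k \<le> b) \<and>
        (\<forall>k<m. \<forall>j<m. k \<noteq> j \<longrightarrow> v k \<le> u j \<or> v j \<le> u k) \<and>
        (\<Sum>k<m. v k - u k) < d
        \<longrightarrow> (\<Sum>k<m. \<bar>f (v k) - f (u k)\<bar>) < e)"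

definition quad_S :: "(real \<Rightarrow> real) \<Rightarrow> real \<Rightarrow> real \<Rightarrow> nat \<Rightarrow> real" where
  "quad_S f a b n =
     (let h = (b - a) / real n; x = (\<lambda>i::nat. a + real i * h) in
      h / 2 * (\<Sum>i<n. f ((3 * x i + x (Suc i)) / 4) + f ((x i + 3 * x (Suc i)) / 4)))"

end

theory Submission
  imports Defs
begin


lemma tag_interval:
  assumes "p tagged_division_of {a..b}" "(x,K) \<in> p"
  shows "K = {Inf K..Sup K} \<and> a \<le> Inf K \<and> Inf K \<le> Sup K \<and> Sup K \<le> b \<and> x \<in> K \<and> Henstock_Kurzweil_Integration.content K = Sup K - Inf K"
proof -
  obtain u v where K: "K = cbox u v" using tagged_division_ofD(4)[OF assms] by blast
  have xK: "x \<in> K" using tagged_division_ofD(2)[OF assms] .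
  have sub: "K \<subseteq> {a..b}" using tagged_division_ofD(3)[OF assms] .
  have uv: "u \<le> v" using xK K by auto
  have "Inf K = u" "Sup K = v" using uv K by auto
  then show ?thesis using K uv sub xK by auto
qed



lemma ac_tagged:
  fixes F :: "real \<Rightarrow> real" and d e :: real
  assumes d: "\<forall>(m::nat) (u::nat \<Rightarrow> real) (v::nat \<Rightarrow> real).
        (\<forall>k<m. a \<le> u k \<and> u k \<le> v k \<and> v k \<le> b) \<and>
        (\<forall>k<m. \<forall>j<m. k \<noteq> j \<longrightarrow> v k \<le> u j \<or> v j \<le> u k) \<and>
        (\<Sum>k<m. v k - u k) < d
        \<longrightarrow> (\<Sum>k<m. \<bar>F (v k) - F (u k)\<bar>) < e"
    and p: "p tagged_division_of {a..b}" and Q: "Q \<subseteq> p"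
    and small: "(\<Sum>(x,K)\<in>Q. Sup K - Inf K) < d"
  shows "(\<Sum>(x,K)\<in>Q. \<bar>F (Sup K) - F (Inf K)\<bar>) < e"
proof -
  have fin: "finite p" using p by blast
  have finQ: "finite Q" using Q fin finite_subset by blast
  let ?Q = "{t\<in>Q. Inf (snd t) < Sup (snd t)}"
  have iv: "\<And>x K. (x,K) \<in> Q \<Longrightarrow> K = {Inf K..Sup K} \<and> a \<le> Inf K \<and> Inf K \<le> Sup K \<and> Sup K \<le> b"
    using tag_interval[OF p] Q by blast
  have e1: "(\<Sum>(x,K)\<in>Q. \<bar>F (Sup K) - F (Inf K)\<bar>) = (\<Sum>(x,K)\<in>?Q. \<bar>F (Sup K) - F (Inf K)\<bar>)"
  proof (rule sum.mono_neutral_right[OF finQ])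
    show "?Q \<subseteq> Q" by auto
    show "\<forall>i\<in>Q - ?Q. (\<lambda>(x,K). \<bar>F (Sup K) - F (Inf K)\<bar>) i = 0"
    proof
      fix i assume "i \<in> Q - ?Q"
      then obtain x K where i: "i = (x,K)" "(x,K) \<in> Q" "\<not> Inf K < Sup K" by (cases i) auto
      then have "Inf K = Sup K" using iv[OF i(2)] by linarith
      then show "(\<lambda>(x,K). \<bar>F (Sup K) - F (Inf K)\<bar>) i = 0" using i by simp
    qed
  qed
  have e2: "(\<Sum>(x,K)\<in>?Q. Sup K - Inf K) \<le> (\<Sum>(x,K)\<in>Q. Sup K - Inf K)"
    by (rule sum_mono2[OF finQ]) (auto dest: iv)
  have finQ': "finite ?Q" using finQ by auto
  obtain m :: nat and g where gQ: "?Q = g ` {i. i < m}" and inj: "inj_on g {i. i < m}"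
    using finite_imp_nat_seg_image_inj_on[OF finQ'] by blast
  define u where "u k = Inf (snd (g k))" for k
  define v where "v k = Sup (snd (g k))" for k
  have gin: "\<And>k. k < m \<Longrightarrow> g k \<in> ?Q" using gQ by auto
  have c1: "\<forall>k<m. a \<le> u k \<and> u k \<le> v k \<and> v k \<le> b"
  proof (intro allI impI)
    fix k assume "k < m"
    then have "g k \<in> Q" using gin by auto
    then show "a \<le> u k \<and> u k \<le> v k \<and> v k \<le> b" unfolding u_def v_def
      using iv[of "fst (g k)" "snd (g k)"] by auto
  qed
  have c2: "\<forall>k<m. \<forall>j<m. k \<noteq> j \<longrightarrow> v k \<le> u j \<or> v j \<le> u k"
  proof (intro allI impI)
    fix k j assume kj: "k < m" "j < m" "k \<noteq> j"
    have gne: "g k \<noteq> g j" using inj kj unfolding inj_on_def by auto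
    obtain x1 K1 where g1: "g k = (x1,K1)" by (cases "g k")
    obtain x2 K2 where g2: "g j = (x2,K2)" by (cases "g j")
    have m1: "(x1,K1) \<in> Q" "Inf K1 < Sup K1" using gin[OF kj(1)] g1 by auto
    have m2: "(x2,K2) \<in> Q" "Inf K2 < Sup K2" using gin[OF kj(2)] g2 by auto
    have dis: "interior K1 \<inter> interior K2 = {}"
      using tagged_division_ofD(5)[OF p, of x1 K1 x2 K2] m1 m2 Q gne g1 g2 by auto
    have K1: "K1 = {Inf K1..Sup K1}" using iv m1 by blast
    have K2: "K2 = {Inf K2..Sup K2}" using iv m2 by blast
    have "Sup K1 \<le> Inf K2 \<or> Sup K2 \<le> Inf K1"
    proof (rule ccontr)
      assume "\<not> ?thesis"
      then have lt: "Inf K2 < Sup K1" "Inf K1 < Sup K2" by auto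
      define z where "z = (max (Inf K1) (Inf K2) + min (Sup K1) (Sup K2)) / 2"
      have "z \<in> {Inf K1<..<Sup K1}" "z \<in> {Inf K2<..<Sup K2}"
        using lt m1(2) m2(2) unfolding z_def by auto
      then have "z \<in> interior K1 \<inter> interior K2"
        by (metis IntI K1 K2 interior_atLeastAtMost_real)
      then show False using dis by auto
    qed
    then show "v k \<le> u j \<or> v j \<le> u k" unfolding u_def v_def using g1 g2 by auto
  qed
  have s1: "(\<Sum>k<m. v k - u k) = (\<Sum>(x,K)\<in>?Q. Sup K - Inf K)"
  proof -
    have "(\<Sum>(x,K)\<in>?Q. Sup K - Inf K) = (\<Sum>k\<in>{i. i<m}. (\<lambda>(x,K). Sup K - Inf K) (g k))"
      unfolding gQ by (rule sum.reindex[OF inj, unfolded comp_def])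
    also have "\<dots> = (\<Sum>k<m. v k - u k)"
      unfolding u_def v_def lessThan_def by (intro sum.cong) (auto simp: case_prod_beta)
    finally show ?thesis by simp
  qed
  have s2: "(\<Sum>k<m. \<bar>F (v k) - F (u k)\<bar>) = (\<Sum>(x,K)\<in>?Q. \<bar>F (Sup K) - F (Inf K)\<bar>)"
  proof -
    have "(\<Sum>(x,K)\<in>?Q. \<bar>F (Sup K) - F (Inf K)\<bar>) = (\<Sum>k\<in>{i. i<m}. (\<lambda>(x,K). \<bar>F (Sup K) - F (Inf K)\<bar>) (g k))"
      unfolding gQ by (rule sum.reindex[OF inj, unfolded comp_def])
    also have "\<dots> = (\<Sum>k<m. \<bar>F (v k) - F (u k)\<bar>)"
      unfolding u_def v_def lessThan_def by (intro sum.cong) (auto simp: case_prod_beta)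
    finally show ?thesis by simp
  qed
  have "(\<Sum>k<m. v k - u k) < d" using s1 e2 small by linarith
  then have "(\<Sum>k<m. \<bar>F (v k) - F (u k)\<bar>) < e" using d c1 c2 by blast
  then show ?thesis using s2 e1 by simp
qed



lemma ftc_ac:
  fixes F F' :: "real \<Rightarrow> real"
  assumes ab: "a \<le> b" and ac: "abs_cont_on F a b" and negN: "negligible N"
    and der: "\<And>x. x \<in> {a..b} - N \<Longrightarrow> (F has_real_derivative F' x) (at x)"
  shows "(F' has_integral (F b - F a)) {a..b}"
proof -
  define g where "g x = (if x \<in> N then 0 else F' x)" for x
  have "(g has_integral (F b - F a)) (cbox a b)"
    unfolding has_integral
  proof (intro allI impI)
    fix e :: real assume e: "e > 0"
    then have e2: "e/2 > 0" by simp
    obtain d where d: "d > 0" and dP: "\<forall>(m::nat) (u::nat \<Rightarrow> real) (v::nat \<Rightarrow> real).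
        (\<forall>k<m. a \<le> u k \<and> u k \<le> v k \<and> v k \<le> b) \<and>
        (\<forall>k<m. \<forall>j<m. k \<noteq> j \<longrightarrow> v k \<le> u j \<or> v j \<le> u k) \<and>
        (\<Sum>k<m. v k - u k) < d
        \<longrightarrow> (\<Sum>k<m. \<bar>F (v k) - F (u k)\<bar>) < e/2"
      using ac[unfolded abs_cont_on_def, rule_format, OF e2] by (elim exE conjE) (rule that)
    have "(indicator N has_integral (0::real)) (cbox a b)" using negN unfolding negligible_def by blast
    then obtain \<gamma>1 where g1: "gauge \<gamma>1" and g1P: "\<And>p. p tagged_division_of cbox a b \<Longrightarrow> \<gamma>1 fine p \<Longrightarrow>
        \<bar>\<Sum>(x,k)\<in>p. Henstock_Kurzweil_Integration.content k * (indicator N x :: real)\<bar> < d"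
      using \<open>(indicator N has_integral (0::real)) (cbox a b)\<close>[unfolded has_integral, rule_format, OF d] by (elim exE conjE) (rule that, auto)
    define \<epsilon> where "\<epsilon> = e / (4 * (b - a + 1))"
    have \<epsilon>: "\<epsilon> > 0" using e ab unfolding \<epsilon>_def by simp
    have \<epsilon>b: "\<epsilon> * (b - a) \<le> e / 4"
    proof -
      have "\<epsilon> * (b - a) \<le> \<epsilon> * (b - a + 1)" using \<epsilon> by simp
      also have "\<dots> = e / 4" unfolding \<epsilon>_def using ab by (simp add: field_simps)
      finally show ?thesis .
    qed
    have "\<forall>x \<in> {a..b} - N. \<exists>r>0. \<forall>y. norm (y - x) < r \<longrightarrow> norm (F y - F x - F' x * (y - x)) \<le> \<epsilon> * norm (y - x)"
    proof
      fix x assume x: "x \<in> {a..b} - N"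
      have "(F has_derivative (\<lambda>h. F' x * h)) (at x)"
        using der[OF x] unfolding has_field_derivative_def by simp
      then show "\<exists>r>0. \<forall>y. norm (y - x) < r \<longrightarrow> norm (F y - F x - F' x * (y - x)) \<le> \<epsilon> * norm (y - x)"
        unfolding has_derivative_at_alt using \<epsilon> by blast
    qed
    from bchoice[OF this] obtain r where r: "\<forall>x \<in> {a..b} - N. r x > 0 \<and> (\<forall>y. norm (y - x) < r x \<longrightarrow> norm (F y - F x - F' x * (y - x)) \<le> \<epsilon> * norm (y - x))"
      by blast
    define \<rho> where "\<rho> x = (if x \<in> {a..b} - N then r x else 1)" for x
    have \<rho>: "\<And>x. \<rho> x > 0" unfolding \<rho>_def using r by auto
    define \<gamma> where "\<gamma> x = \<gamma>1 x \<inter> ball x (\<rho> x)" for x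
    have gg: "gauge \<gamma>" unfolding \<gamma>_def using g1 gauge_ball_dependent[of \<rho>] \<rho> by auto
    show "\<exists>\<gamma>. gauge \<gamma> \<and> (\<forall>p. p tagged_division_of cbox a b \<and> \<gamma> fine p \<longrightarrow>
        norm ((\<Sum>(x,k)\<in>p. Henstock_Kurzweil_Integration.content k *\<^sub>R g x) - (F b - F a)) < e)"
    proof (intro exI conjI allI impI)
      show "gauge \<gamma>" by (rule gg)
      fix p assume pp: "p tagged_division_of cbox a b \<and> \<gamma> fine p"
      then have p: "p tagged_division_of {a..b}" and fine: "\<gamma> fine p" by auto
      have fine1: "\<gamma>1 fine p" and fine2: "(\<lambda>x. ball x (\<rho> x)) fine p"
        using fine unfolding \<gamma>_def fine_Int by auto
      have finp: "finite p" using p by blast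
      define T where "T = {t\<in>p. fst t \<in> N}"
      have finT: "finite T" using finp unfolding T_def by auto
      define \<phi> where "\<phi> = (\<lambda>(x,K). Henstock_Kurzweil_Integration.content K * g x - (F (Sup K) - F (Inf K)))"
      have sumF: "(\<Sum>(x,K)\<in>p. F (Sup K) - F (Inf K)) = F b - F a"
        by (rule additive_tagged_division_1[OF ab p])
      have sumL: "(\<Sum>(x,K)\<in>p. Sup K - Inf K) = b - a"
        using additive_tagged_division_1[OF ab p, of "\<lambda>x. x"] by simp
      have eq: "(\<Sum>(x,k)\<in>p. Henstock_Kurzweil_Integration.content k *\<^sub>R g x) - (F b - F a) = (\<Sum>t\<in>p. \<phi> t)"
        unfolding sumF[symmetric] \<phi>_def by (simp add: sum_subtractf case_prod_beta)
      have "\<bar>\<Sum>t\<in>p. \<phi> t\<bar> \<le> (\<Sum>t\<in>p. \<bar>\<phi> t\<bar>)" by (rule sum_abs)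
      also have "\<dots> = (\<Sum>t\<in>T. \<bar>\<phi> t\<bar>) + (\<Sum>t\<in>p - T. \<bar>\<phi> t\<bar>)"
        using sum.subset_diff[of T p "\<lambda>t. \<bar>\<phi> t\<bar>"] finp unfolding T_def by (simp add: add.commute)
      also have "\<dots> < e/2 + e/2"
      proof (rule add_less_le_mono)
        have c1: "\<And>x K. (x,K) \<in> p \<Longrightarrow> Henstock_Kurzweil_Integration.content K = Sup K - Inf K"
          using tag_interval[OF p] by blast
        have "(\<Sum>(x,K)\<in>T. Sup K - Inf K) = (\<Sum>(x,K)\<in>p. Henstock_Kurzweil_Integration.content K * (indicator N x :: real))"
        proof -
          have "(\<Sum>(x,K)\<in>p. Henstock_Kurzweil_Integration.content K * (indicator N x :: real))
              = (\<Sum>t\<in>p. if fst t \<in> N then (\<lambda>(x,K). Sup K - Inf K) t else 0)"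
            by (intro sum.cong refl) (auto simp: c1 indicator_def)
          also have "\<dots> = (\<Sum>(x,K)\<in>T. Sup K - Inf K)"
            unfolding T_def by (rule sum.inter_filter[OF finp, symmetric])
          finally show ?thesis by simp
        qed
        also have "\<dots> < d" using g1P[OF _ fine1] p by (simp add: abs_less_iff)
        finally have smallT: "(\<Sum>(x,K)\<in>T. Sup K - Inf K) < d" .
        have "(\<Sum>(x,K)\<in>T. \<bar>F (Sup K) - F (Inf K)\<bar>) < e/2"
          by (rule ac_tagged[OF dP p _ smallT]) (auto simp: T_def)
        moreover have "(\<Sum>t\<in>T. \<bar>\<phi> t\<bar>) = (\<Sum>(x,K)\<in>T. \<bar>F (Sup K) - F (Inf K)\<bar>)"
          by (intro sum.cong refl) (auto simp: T_def \<phi>_def g_def)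
        ultimately show "(\<Sum>t\<in>T. \<bar>\<phi> t\<bar>) < e/2" by simp
      next
        have pt: "\<bar>\<phi> t\<bar> \<le> \<epsilon> * (\<lambda>(x,K). Sup K - Inf K) t" if t: "t \<in> p - T" for t
        proof -
          obtain x K where tx: "t = (x,K)" by (cases t)
          have xK: "(x,K) \<in> p" "x \<notin> N" using t tx unfolding T_def by auto
          have iv: "K = {Inf K..Sup K} \<and> a \<le> Inf K \<and> Inf K \<le> Sup K \<and> Sup K \<le> b \<and> x \<in> K \<and> Henstock_Kurzweil_Integration.content K = Sup K - Inf K"
            using tag_interval[OF p xK(1)] .
          define u where "u = Inf K"
          define v where "v = Sup K"
          have xI: "Inf K \<le> x \<and> x \<le> Sup K" using iv by (metis atLeastAtMost_iff)
          have xab: "x \<in> {a..b} - N" using xI iv xK by auto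
          have sub: "K \<subseteq> ball x (r x)" using fineD[OF fine2 xK(1)] xab unfolding \<rho>_def by auto
          have uK: "u \<in> K" "v \<in> K" using iv unfolding u_def v_def by (metis atLeastAtMost_iff order_refl)+
          have ux: "u \<le> x" "x \<le> v" using xI unfolding u_def v_def by auto
          have "norm (u - x) < r x" "norm (v - x) < r x" using sub uK by (auto simp: dist_real_def dist_commute)
          then have A: "\<bar>F v - F x - F' x * (v - x)\<bar> \<le> \<epsilon> * \<bar>v - x\<bar>"
            and B: "\<bar>F u - F x - F' x * (u - x)\<bar> \<le> \<epsilon> * \<bar>u - x\<bar>" using r xab by auto
          have id: "\<phi> t = (F u - F x - F' x * (u - x)) - (F v - F x - F' x * (v - x))"
          proof -
            have cK: "Henstock_Kurzweil_Integration.content K = Sup K - Inf K" using iv by simp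
            show ?thesis unfolding \<phi>_def tx using xK(2) unfolding g_def u_def v_def by (simp add: cK algebra_simps)
          qed
          have "\<bar>\<phi> t\<bar> \<le> \<epsilon> * \<bar>u - x\<bar> + \<epsilon> * \<bar>v - x\<bar>" unfolding id using A B by linarith
          also have "\<dots> = \<epsilon> * (v - u)" using ux by (simp add: algebra_simps)
          finally show ?thesis unfolding tx u_def v_def by simp
        qed
        have "(\<Sum>t\<in>p - T. \<bar>\<phi> t\<bar>) \<le> (\<Sum>t\<in>p - T. \<epsilon> * (\<lambda>(x,K). Sup K - Inf K) t)"
          by (rule sum_mono) (rule pt)
        also have "\<dots> \<le> (\<Sum>t\<in>p. \<epsilon> * (\<lambda>(x,K). Sup K - Inf K) t)"
        proof (rule sum_mono2[OF finp])
          show "p - T \<subseteq> p" by auto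
          fix t assume "t \<in> p - (p - T)"
          then have tp: "t \<in> p" by auto
          obtain x K where tx: "t = (x,K)" by (cases t)
          have "Inf K \<le> Sup K" using tag_interval[OF p, of x K] tp tx by auto
          then show "0 \<le> \<epsilon> * (\<lambda>(x,K). Sup K - Inf K) t" using \<epsilon> tx by simp
        qed
        also have "\<dots> = \<epsilon> * (b - a)" using sumL by (simp add: sum_distrib_left[symmetric] case_prod_beta)
        also have "\<dots> \<le> e/2" using \<epsilon>b e by simp
        finally show "(\<Sum>t\<in>p - T. \<bar>\<phi> t\<bar>) \<le> e/2" .
      qed
      finally show "norm ((\<Sum>(x,k)\<in>p. Henstock_Kurzweil_Integration.content k *\<^sub>R g x) - (F b - F a)) < e"
        unfolding eq by simp
    qed
  qed
  then have "(g has_integral (F b - F a)) {a..b}" by simp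
  then show ?thesis
    by (rule has_integral_spike[OF negN, rotated]) (auto simp: g_def)
qed



lemma ac_sub:
  assumes "abs_cont_on f a b" "a \<le> p" "q \<le> b"
  shows "abs_cont_on f p q"
  unfolding abs_cont_on_def
proof (intro allI impI)
  fix e :: real assume e: "e > 0"
  obtain d where d: "d > 0" and dP: "\<forall>(m::nat) (u::nat \<Rightarrow> real) (v::nat \<Rightarrow> real).
        (\<forall>k<m. a \<le> u k \<and> u k \<le> v k \<and> v k \<le> b) \<and>
        (\<forall>k<m. \<forall>j<m. k \<noteq> j \<longrightarrow> v k \<le> u j \<or> v j \<le> u k) \<and>
        (\<Sum>k<m. v k - u k) < d
        \<longrightarrow> (\<Sum>k<m. \<bar>f (v k) - f (u k)\<bar>) < e"
    using assms(1)[unfolded abs_cont_on_def, rule_format, OF e] by (elim exE conjE) (rule that)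
  show "\<exists>d>0. \<forall>(m::nat) (u::nat \<Rightarrow> real) (v::nat \<Rightarrow> real).
        (\<forall>k<m. p \<le> u k \<and> u k \<le> v k \<and> v k \<le> q) \<and>
        (\<forall>k<m. \<forall>j<m. k \<noteq> j \<longrightarrow> v k \<le> u j \<or> v j \<le> u k) \<and>
        (\<Sum>k<m. v k - u k) < d
        \<longrightarrow> (\<Sum>k<m. \<bar>f (v k) - f (u k)\<bar>) < e"
  proof (intro exI conjI allI impI)
    show "d > 0" by (rule d)
    fix m :: nat and u v :: "nat \<Rightarrow> real"
    assume h: "(\<forall>k<m. p \<le> u k \<and> u k \<le> v k \<and> v k \<le> q) \<and>
        (\<forall>k<m. \<forall>j<m. k \<noteq> j \<longrightarrow> v k \<le> u j \<or> v j \<le> u k) \<and>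
        (\<Sum>k<m. v k - u k) < d"
    then have "(\<forall>k<m. a \<le> u k \<and> u k \<le> v k \<and> v k \<le> b)" using assms(2,3) by force
    then show "(\<Sum>k<m. \<bar>f (v k) - f (u k)\<bar>) < e" using dP h by blast
  qed
qed

lemma ac_cont:
  assumes ac: "abs_cont_on f a b"
  shows "continuous_on {a..b} f"
  unfolding continuous_on_iff
proof (intro ballI allI impI)
  fix x e :: real assume x: "x \<in> {a..b}" and e: "e > 0"
  obtain d where d: "d > 0" and dP: "\<forall>(m::nat) (u::nat \<Rightarrow> real) (v::nat \<Rightarrow> real).
        (\<forall>k<m. a \<le> u k \<and> u k \<le> v k \<and> v k \<le> b) \<and>
        (\<forall>k<m. \<forall>j<m. k \<noteq> j \<longrightarrow> v k \<le> u j \<or> v j \<le> u k) \<and>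
        (\<Sum>k<m. v k - u k) < d
        \<longrightarrow> (\<Sum>k<m. \<bar>f (v k) - f (u k)\<bar>) < e"
    using ac[unfolded abs_cont_on_def, rule_format, OF e] by (elim exE conjE) (rule that)
  show "\<exists>d>0. \<forall>x'\<in>{a..b}. dist x' x < d \<longrightarrow> dist (f x') (f x) < e"
  proof (intro exI conjI ballI impI)
    show "d > 0" by (rule d)
    fix y assume y: "y \<in> {a..b}" and dy: "dist y x < d"
    have "(\<Sum>k<(1::nat). \<bar>f ((\<lambda>_. max x y) k) - f ((\<lambda>_. min x y) k)\<bar>) < e"
    proof -
      have "max x y - min x y < d" using dy by (auto simp: dist_real_def max_def min_def)
      then show ?thesis using dP[rule_format, of 1 "\<lambda>_. min x y" "\<lambda>_. max x y"] x y by auto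
    qed
    then show "dist (f y) (f x) < e"
      by (cases "x \<le> y") (auto simp: dist_real_def max_def min_def abs_minus_commute)
  qed
qed

lemma ac_mult_lin:
  fixes f :: "real \<Rightarrow> real"
  assumes ac: "abs_cont_on f p q"
  shows "abs_cont_on (\<lambda>t. (t - c) * f t) p q"
  unfolding abs_cont_on_def
proof (intro allI impI)
  fix e :: real assume e: "e > 0"
  have "bounded (f ` {p..q})"
    using compact_continuous_image[OF ac_cont[OF ac]] compact_imp_bounded by blast
  then obtain B where B: "B > 0" "\<And>t. t \<in> {p..q} \<Longrightarrow> \<bar>f t\<bar> \<le> B"
    unfolding bounded_pos by auto
  define M where "M = \<bar>p - c\<bar> + \<bar>q - c\<bar> + 1"
  have M: "M > 0" unfolding M_def by simp
  have Mb: "\<And>t. t \<in> {p..q} \<Longrightarrow> \<bar>t - c\<bar> \<le> M" unfolding M_def by auto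
  have e2: "e / (2*M) > 0" using e M by simp
  obtain d where d: "d > 0" and dP: "\<forall>(m::nat) (u::nat \<Rightarrow> real) (v::nat \<Rightarrow> real).
        (\<forall>k<m. p \<le> u k \<and> u k \<le> v k \<and> v k \<le> q) \<and>
        (\<forall>k<m. \<forall>j<m. k \<noteq> j \<longrightarrow> v k \<le> u j \<or> v j \<le> u k) \<and>
        (\<Sum>k<m. v k - u k) < d
        \<longrightarrow> (\<Sum>k<m. \<bar>f (v k) - f (u k)\<bar>) < e / (2*M)"
    using ac[unfolded abs_cont_on_def, rule_format, OF e2] by (elim exE conjE) (rule that)
  show "\<exists>d>0. \<forall>(m::nat) (u::nat \<Rightarrow> real) (v::nat \<Rightarrow> real).
        (\<forall>k<m. p \<le> u k \<and> u k \<le> v k \<and> v k \<le> q) \<and>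
        (\<forall>k<m. \<forall>j<m. k \<noteq> j \<longrightarrow> v k \<le> u j \<or> v j \<le> u k) \<and>
        (\<Sum>k<m. v k - u k) < d
        \<longrightarrow> (\<Sum>k<m. \<bar>(v k - c) * f (v k) - (u k - c) * f (u k)\<bar>) < e"
  proof (intro exI conjI allI impI)
    show "min d (e / (2*B)) > 0" using d e B by simp
    fix m :: nat and u v :: "nat \<Rightarrow> real"
    assume h: "(\<forall>k<m. p \<le> u k \<and> u k \<le> v k \<and> v k \<le> q) \<and>
        (\<forall>k<m. \<forall>j<m. k \<noteq> j \<longrightarrow> v k \<le> u j \<or> v j \<le> u k) \<and>
        (\<Sum>k<m. v k - u k) < min d (e / (2*B))"
    then have s1: "(\<Sum>k<m. \<bar>f (v k) - f (u k)\<bar>) < e / (2*M)" using dP by auto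
    have s2: "(\<Sum>k<m. v k - u k) < e / (2*B)" using h by auto
    have pt: "\<bar>(v k - c) * f (v k) - (u k - c) * f (u k)\<bar> \<le> M * \<bar>f (v k) - f (u k)\<bar> + B * (v k - u k)"
      if k: "k < m" for k
    proof -
      have uv: "p \<le> u k" "u k \<le> v k" "v k \<le> q" using h k by auto
      have id: "(v k - c) * f (v k) - (u k - c) * f (u k) = (v k - c) * (f (v k) - f (u k)) + (v k - u k) * f (u k)"
        by (simp add: algebra_simps)
      have "\<bar>(v k - c) * (f (v k) - f (u k))\<bar> \<le> M * \<bar>f (v k) - f (u k)\<bar>"
        unfolding abs_mult by (rule mult_right_mono) (use Mb uv in auto)
      moreover have "\<bar>(v k - u k) * f (u k)\<bar> \<le> B * (v k - u k)"
        unfolding abs_mult using B(2)[of "u k"] uv by (metis abs_of_nonneg diff_ge_0_iff_ge atLeastAtMost_iff mult.commute mult_right_mono order_trans)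
      ultimately show ?thesis unfolding id by (smt (verit) abs_triangle_ineq)
    qed
    have "(\<Sum>k<m. \<bar>(v k - c) * f (v k) - (u k - c) * f (u k)\<bar>) \<le> (\<Sum>k<m. M * \<bar>f (v k) - f (u k)\<bar> + B * (v k - u k))"
      by (rule sum_mono) (use pt in auto)
    also have "\<dots> = M * (\<Sum>k<m. \<bar>f (v k) - f (u k)\<bar>) + B * (\<Sum>k<m. v k - u k)"
      by (simp add: sum.distrib sum_distrib_left)
    also have "\<dots> < M * (e / (2*M)) + B * (e / (2*B))"
      by (rule add_strict_mono; rule mult_strict_left_mono) (use s1 s2 M B in auto)
    also have "\<dots> = e" using M B by simp
    finally show "(\<Sum>k<m. \<bar>(v k - c) * f (v k) - (u k - c) * f (u k)\<bar>) < e" .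
  qed
qed



lemma amgm:
  fixes k w \<alpha> :: real
  assumes "\<alpha> > 0"
  shows "\<bar>k * w\<bar> \<le> (\<alpha> * k\<^sup>2 + w\<^sup>2 / \<alpha>) / 2"
proof -
  have "0 \<le> (\<alpha> * \<bar>k\<bar> - \<bar>w\<bar>)\<^sup>2" by simp
  then have h: "2 * \<alpha> * (\<bar>k\<bar> * \<bar>w\<bar>) \<le> \<alpha>\<^sup>2 * k\<^sup>2 + w\<^sup>2"
    by (simp add: power2_eq_square algebra_simps)
  have e1: "(\<alpha> * k\<^sup>2 + w\<^sup>2 / \<alpha>) / 2 = (\<alpha>\<^sup>2 * k\<^sup>2 + w\<^sup>2) / (2 * \<alpha>)"
    using assms by (simp add: field_simps power2_eq_square)
  have "\<bar>k\<bar> * \<bar>w\<bar> \<le> (\<alpha>\<^sup>2 * k\<^sup>2 + w\<^sup>2) / (2 * \<alpha>)"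
    using h assms by (simp add: pos_le_divide_eq mult.commute mult.left_commute)
  then show ?thesis unfolding e1 abs_mult .
qed

lemma poly_int1:
  fixes p q z :: real assumes "p \<le> q"
  shows "((\<lambda>t. t - z) has_integral ((q - z)\<^sup>2 - (p - z)\<^sup>2) / 2) {p..q}"
proof -
  have "((\<lambda>t. t - z) has_integral ((\<lambda>t. (t - z)\<^sup>2 / 2) q - (\<lambda>t. (t - z)\<^sup>2 / 2) p)) {p..q}"
  proof (rule fundamental_theorem_of_calculus[OF assms])
    fix x assume "x \<in> {p..q}"
    have "((\<lambda>t. (t - z)\<^sup>2 / 2) has_real_derivative (x - z)) (at x within {p..q})"
      by (rule derivative_eq_intros refl | simp)+
    then show "((\<lambda>t. (t - z)\<^sup>2 / 2) has_vector_derivative (x - z)) (at x within {p..q})"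
      by (simp add: has_real_derivative_iff_has_vector_derivative)
  qed
  then show ?thesis by (simp add: diff_divide_distrib)
qed

lemma poly_int2:
  fixes p q z :: real assumes "p \<le> q"
  shows "((\<lambda>t. (t - z)\<^sup>2) has_integral ((q - z)^3 - (p - z)^3) / 3) {p..q}"
proof -
  have "((\<lambda>t. (t - z)\<^sup>2) has_integral ((\<lambda>t. (t - z)^3 / 3) q - (\<lambda>t. (t - z)^3 / 3) p)) {p..q}"
  proof (rule fundamental_theorem_of_calculus[OF assms])
    fix x assume "x \<in> {p..q}"
    have "((\<lambda>t. (t - z)^3 / 3) has_real_derivative (x - z)\<^sup>2) (at x within {p..q})"
      by (rule derivative_eq_intros refl | simp)+
    then show "((\<lambda>t. (t - z)^3 / 3) has_vector_derivative (x - z)\<^sup>2) (at x within {p..q})"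
      by (simp add: has_real_derivative_iff_has_vector_derivative)
  qed
  then show ?thesis by (simp add: diff_divide_distrib)
qed

lemma piece_int:
  fixes f f' :: "real \<Rightarrow> real"
  assumes ac: "abs_cont_on f a b" and negN: "negligible N"
    and der: "\<And>x. x \<in> {a..b} - N \<Longrightarrow> (f has_real_derivative f' x) (at x)"
    and pq: "a \<le> p" "p \<le> q" "q \<le> b"
  shows "((\<lambda>t. (t - z) * f' t) has_integral ((q - z) * f q - (p - z) * f p - integral {p..q} f)) {p..q}"
proof -
  have acp: "abs_cont_on f p q" by (rule ac_sub[OF ac pq(1,3)])
  have acF: "abs_cont_on (\<lambda>t. (t - z) * f t) p q" by (rule ac_mult_lin[OF acp])
  have derF: "((\<lambda>t. (t - z) * f t) has_real_derivative (f x + (x - z) * f' x)) (at x)"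
    if x: "x \<in> {p..q} - N" for x
  proof -
    have d: "(f has_real_derivative f' x) (at x)" using der x pq by auto
    have X: "((\<lambda>t. (t - z) * f t) has_real_derivative ((x - z) * f' x + (1 - 0) * f x)) (at x)"
      by (rule DERIV_mult'[OF DERIV_diff[OF DERIV_ident DERIV_const] d])
    show ?thesis using X by (simp add: algebra_simps)
  qed
  have I1: "((\<lambda>x. f x + (x - z) * f' x) has_integral ((q - z) * f q - (p - z) * f p)) {p..q}"
    using ftc_ac[OF pq(2) acF negN derF] by simp
  have "f integrable_on {p..q}" by (rule integrable_continuous_real[OF ac_cont[OF acp]])
  then have I2: "(f has_integral integral {p..q} f) {p..q}" by (rule integrable_integral)
  from has_integral_diff[OF I1 I2] show ?thesis by simp
qed



lemma sq_integrable:
  fixes f' :: "real \<Rightarrow> real"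
  assumes fi: "f' integrable_on {p..q}" and f2: "(\<lambda>t. (f' t)\<^sup>2) integrable_on {p..q}"
  shows "(\<lambda>t. (f' t - c)\<^sup>2) integrable_on {p..q}"
proof -
  have "(\<lambda>t. ((f' t)\<^sup>2 - (2*c) * f' t) + c\<^sup>2) integrable_on {p..q}"
    using fi f2 by (intro integrable_add integrable_diff integrable_on_mult_right integrable_const_ivl)
  moreover have "(\<lambda>t. ((f' t)\<^sup>2 - (2*c) * f' t) + c\<^sup>2) = (\<lambda>t. (f' t - c)\<^sup>2)"
    by (auto simp: power2_eq_square algebra_simps)
  ultimately show ?thesis by simp
qed

lemma piece_bound:
  fixes f f' :: "real \<Rightarrow> real"
  assumes ac: "abs_cont_on f a b" and negN: "negligible N"
    and der: "\<And>x. x \<in> {a..b} - N \<Longrightarrow> (f has_real_derivative f' x) (at x)"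
    and pq: "a \<le> p" "p \<le> q" "q \<le> b"
    and fi: "f' integrable_on {p..q}" and f2: "(\<lambda>t. (f' t)\<^sup>2) integrable_on {p..q}"
    and \<alpha>: "\<alpha> > 0"
  shows "\<bar>(q - z) * f q - (p - z) * f p - integral {p..q} f - c * (((q - z)\<^sup>2 - (p - z)\<^sup>2) / 2)\<bar>
         \<le> (\<alpha> * (((q - z)^3 - (p - z)^3) / 3) + integral {p..q} (\<lambda>t. (f' t - c)\<^sup>2) / \<alpha>) / 2"
proof -
  define X where "X = (q - z) * f q - (p - z) * f p - integral {p..q} f - c * (((q - z)\<^sup>2 - (p - z)\<^sup>2) / 2)"
  define P2 where "P2 = ((q - z)^3 - (p - z)^3) / 3"
  define W where "W = integral {p..q} (\<lambda>t. (f' t - c)\<^sup>2)"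
  have J: "((\<lambda>t. (t - z) * (f' t - c)) has_integral X) {p..q}"
  proof -
    from has_integral_diff[OF piece_int[OF ac negN der pq, of z] has_integral_mult_right[OF poly_int1[OF pq(2)], of c z]]
    have "((\<lambda>t. (t - z) * f' t - c * (t - z)) has_integral X) {p..q}" unfolding X_def .
    moreover have "(\<lambda>t. (t - z) * f' t - c * (t - z)) = (\<lambda>t. (t - z) * (f' t - c))" by (auto simp: algebra_simps)
    ultimately show ?thesis by simp
  qed
  have wi: "((\<lambda>t. (f' t - c)\<^sup>2) has_integral W) {p..q}"
    unfolding W_def by (rule integrable_integral[OF sq_integrable[OF fi f2]])
  have G: "((\<lambda>t. (\<alpha> * (t - z)\<^sup>2 + (f' t - c)\<^sup>2 * (1/\<alpha>)) * (1/2)) has_integral ((\<alpha> * P2 + W * (1/\<alpha>)) * (1/2))) {p..q}"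
    unfolding P2_def
    by (intro has_integral_mult_left has_integral_add has_integral_mult_right poly_int2 pq wi)
  have pw: "\<bar>(t - z) * (f' t - c)\<bar> \<le> (\<alpha> * (t - z)\<^sup>2 + (f' t - c)\<^sup>2 * (1/\<alpha>)) * (1/2)" for t
    using amgm[OF \<alpha>, of "t - z" "f' t - c"] by simp
  have "X \<le> (\<alpha> * P2 + W * (1/\<alpha>)) * (1/2)"
    by (rule has_integral_le[OF J G]) (use pw in \<open>meson abs_ge_self order_trans\<close>)
  moreover have "- X \<le> (\<alpha> * P2 + W * (1/\<alpha>)) * (1/2)"
    by (rule has_integral_le[OF has_integral_neg[OF J] G]) (use pw in \<open>meson abs_ge_minus_self order_trans\<close>)
  ultimately have "\<bar>X\<bar> \<le> (\<alpha> * P2 + W * (1/\<alpha>)) * (1/2)" by simp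
  then show ?thesis unfolding X_def P2_def W_def by simp
qed



lemma sub_bound:
  fixes f f' :: "real \<Rightarrow> real"
  assumes ac: "abs_cont_on f a b" and negN: "negligible N"
    and der: "\<And>x. x \<in> {a..b} - N \<Longrightarrow> (f has_real_derivative f' x) (at x)"
    and pq: "a \<le> p" "p \<le> q" "q \<le> b"
    and fi: "f' integrable_on {p..q}" and f2: "(\<lambda>t. (f' t)\<^sup>2) integrable_on {p..q}"
    and \<alpha>: "\<alpha> > 0"
  shows "\<bar>integral {p..q} f - (q - p) / 2 * (f ((3 * p + q) / 4) + f ((p + 3 * q) / 4))\<bar>
         \<le> (\<alpha> * ((q - p)^3 / 48) + integral {p..q} (\<lambda>t. (f' t - c)\<^sup>2) / \<alpha>) / 2"
proof -
  define h where "h = q - p"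
  define q1 where "q1 = (3 * p + q) / 4"
  define q3 where "q3 = (p + 3 * q) / 4"
  define m where "m = (p + q) / 2"
  have o: "p \<le> q1" "q1 \<le> q3" "q3 \<le> q" using pq unfolding q1_def q3_def by auto
  have e1: "q1 - p = h/4" "q3 - m = h/4" "q1 - m = -(h/4)" "q3 - q = -(h/4)"
    unfolding h_def q1_def q3_def m_def by (auto simp: field_simps)
  have sub: "\<And>u v. p \<le> u \<Longrightarrow> v \<le> q \<Longrightarrow> {u..v} \<subseteq> {p..q}" by auto
  have fiu: "\<And>u v. p \<le> u \<Longrightarrow> v \<le> q \<Longrightarrow> f' integrable_on {u..v}"
    using integrable_subinterval_real[OF fi sub] by blast
  have f2u: "\<And>u v. p \<le> u \<Longrightarrow> v \<le> q \<Longrightarrow> (\<lambda>t. (f' t)\<^sup>2) integrable_on {u..v}"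
    using integrable_subinterval_real[OF f2 sub] by blast
  have i1: "f' integrable_on {p..q1}" "(\<lambda>t. (f' t)\<^sup>2) integrable_on {p..q1}" using fiu f2u o by auto
  have i2: "f' integrable_on {q1..q3}" "(\<lambda>t. (f' t)\<^sup>2) integrable_on {q1..q3}" using fiu f2u o by auto
  have i3: "f' integrable_on {q3..q}" "(\<lambda>t. (f' t)\<^sup>2) integrable_on {q3..q}" using fiu f2u o by auto
  have ab1: "a \<le> p" "q1 \<le> b" "a \<le> q1" "q3 \<le> b" "a \<le> q3" using pq o by auto
  note B1 = piece_bound[where z=p and c=c, OF ac negN der ab1(1) o(1) ab1(2) i1 \<alpha>]
  note B2 = piece_bound[where z=m and c=c, OF ac negN der ab1(3) o(2) ab1(4) i2 \<alpha>]
  note B3 = piece_bound[where z=q and c=c, OF ac negN der ab1(5) o(3) pq(3) i3 \<alpha>]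
  have B1': "\<bar>h/4 * f q1 - integral {p..q1} f - c * (h\<^sup>2/32)\<bar> \<le> (\<alpha> * (h^3/192) + integral {p..q1} (\<lambda>t. (f' t - c)\<^sup>2) / \<alpha>) / 2"
    using B1 pq o unfolding e1 by (simp add: power2_eq_square power3_eq_cube)
  have B2': "\<bar>h/4 * f q3 + h/4 * f q1 - integral {q1..q3} f\<bar> \<le> (\<alpha> * (h^3/96) + integral {q1..q3} (\<lambda>t. (f' t - c)\<^sup>2) / \<alpha>) / 2"
    using B2 pq o unfolding e1 by (simp add: power2_eq_square power3_eq_cube)
  have B3': "\<bar>h/4 * f q3 - integral {q3..q} f + c * (h\<^sup>2/32)\<bar> \<le> (\<alpha> * (h^3/192) + integral {q3..q} (\<lambda>t. (f' t - c)\<^sup>2) / \<alpha>) / 2"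
    using B3 pq o unfolding e1 by (simp add: power2_eq_square power3_eq_cube)
  have fint: "f integrable_on {p..q}"
    by (rule integrable_continuous_real[OF ac_cont[OF ac_sub[OF ac pq(1,3)]]])
  have wint: "(\<lambda>t. (f' t - c)\<^sup>2) integrable_on {p..q}" by (rule sq_integrable[OF fi f2])
  have c3: "\<And>g::real\<Rightarrow>real. g integrable_on {p..q} \<Longrightarrow> integral {p..q} g = integral {p..q1} g + integral {q1..q3} g + integral {q3..q} g"
  proof -
    fix g :: "real \<Rightarrow> real" assume g: "g integrable_on {p..q}"
    have g3: "g integrable_on {q1..q}" using integrable_subinterval_real[OF g, of q1 q] o by auto
    have "integral {p..q} g = integral {p..q1} g + integral {q1..q} g"
      using Henstock_Kurzweil_Integration.integral_combine[OF _ _ g, of q1] o by auto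
    moreover have "integral {q1..q} g = integral {q1..q3} g + integral {q3..q} g"
      using Henstock_Kurzweil_Integration.integral_combine[OF _ _ g3, of q3] o by auto
    ultimately show "integral {p..q} g = integral {p..q1} g + integral {q1..q3} g + integral {q3..q} g" by simp
  qed
  have E: "integral {p..q} f - (q - p) / 2 * (f q1 + f q3)
     = - ((h/4 * f q1 - integral {p..q1} f - c * (h\<^sup>2/32)) + (h/4 * f q3 + h/4 * f q1 - integral {q1..q3} f)
          + (h/4 * f q3 - integral {q3..q} f + c * (h\<^sup>2/32)))"
    unfolding c3[OF fint] h_def by (simp add: field_simps)
  have "\<bar>integral {p..q} f - (q - p) / 2 * (f q1 + f q3)\<bar>
     \<le> (\<alpha> * (h^3/192) + integral {p..q1} (\<lambda>t. (f' t - c)\<^sup>2) / \<alpha>) / 2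
      + (\<alpha> * (h^3/96) + integral {q1..q3} (\<lambda>t. (f' t - c)\<^sup>2) / \<alpha>) / 2
      + (\<alpha> * (h^3/192) + integral {q3..q} (\<lambda>t. (f' t - c)\<^sup>2) / \<alpha>) / 2"
    unfolding E using B1' B2' B3' by linarith
  also have "\<dots> = (\<alpha> * ((q - p)^3 / 48) + integral {p..q} (\<lambda>t. (f' t - c)\<^sup>2) / \<alpha>) / 2"
    unfolding c3[OF wint] h_def using \<alpha> by (simp add: field_simps)
  finally show ?thesis unfolding q1_def q3_def .
qed



lemma partition_integral:
  fixes \<phi> :: "real \<Rightarrow> real" and h :: real
  assumes "h \<ge> 0" "\<phi> integrable_on {a..a + real n * h}"
  shows "integral {a..a + real n * h} \<phi> = (\<Sum>i<n. integral {a + real i * h..a + real (Suc i) * h} \<phi>)"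
  using assms(2)
proof (induction n)
  case 0
  then show ?case by simp
next
  case (Suc n)
  have le: "a \<le> a + real n * h" "a + real n * h \<le> a + real (Suc n) * h" using assms(1) by (auto simp: algebra_simps)
  have "\<phi> integrable_on {a..a + real n * h}"
    using integrable_subinterval_real[OF Suc.prems, of a "a + real n * h"] le by auto
  then have IH: "integral {a..a + real n * h} \<phi> = (\<Sum>i<n. integral {a + real i * h..a + real (Suc i) * h} \<phi>)"
    using Suc.IH by blast
  have "integral {a..a + real (Suc n) * h} \<phi> = integral {a..a + real n * h} \<phi> + integral {a + real n * h..a + real (Suc n) * h} \<phi>"
    using Henstock_Kurzweil_Integration.integral_combine[OF le Suc.prems] by simp
  then show ?case using IH by simp
qed

lemma opt:
  fixes X A W :: real
  assumes A: "A > 0" and W: "W \<ge> 0" and H: "\<And>\<alpha>. \<alpha> > 0 \<Longrightarrow> X \<le> (\<alpha> * A + W / \<alpha>) / 2"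
  shows "X \<le> sqrt A * sqrt W"
proof (cases "W = 0")
  case True
  show ?thesis
  proof (rule ccontr)
    assume "\<not> ?thesis"
    then have X: "X > 0" using True by simp
    have "X \<le> ((X / A) * A + W / (X / A)) / 2" using H[of "X / A"] X A by simp
    then show False using True X A by simp
  qed
next
  case False
  then have Wp: "W > 0" using W by simp
  define \<alpha> where "\<alpha> = sqrt W / sqrt A"
  have \<alpha>: "\<alpha> > 0" unfolding \<alpha>_def using Wp A by simp
  have sA: "sqrt A * sqrt A = A" using A by simp
  have sW: "sqrt W * sqrt W = W" using W by simp
  have "(\<alpha> * A + W / \<alpha>) / 2 = sqrt A * sqrt W"
    unfolding \<alpha>_def using A Wp
    by (simp add: field_simps)
  then show ?thesis using H[OF \<alpha>] by simp
qed



lemma A_sum: "(\<Sum>i<n. (u + w i / \<alpha>) / 2) = (real n * u + (\<Sum>i<n. w i) / \<alpha>) / (2::real)"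
  by (induction n) (auto simp: algebra_simps add_divide_distrib)

theorem theorem3p3:
  fixes f f' :: "real \<Rightarrow> real" and a b :: real and n :: nat
  assumes "a < b" and "n \<ge> 1"
    and "abs_cont_on f a b"
    and "\<exists>N. negligible N \<and> (\<forall>x\<in>{a..b} - N. (f has_real_derivative f' x) (at x))"
    and "(\<lambda>x. (f' x)\<^sup>2) integrable_on {a..b}"
  shows "\<bar>integral {a..b} f - quad_S f a b n\<bar>
         \<le> (b - a) powr (3/2) / (4 * sqrt 3 * real n)
           * sqrt (integral {a..b} (\<lambda>x. (f' x)\<^sup>2) - (f b - f a)\<^sup>2 / (b - a))"
proof -
  note ab = assms(1) and ac = assms(3) and f2 = assms(5)
  obtain N where negN: "negligible N" and der: "\<And>x. x \<in> {a..b} - N \<Longrightarrow> (f has_real_derivative f' x) (at x)"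
    using assms(4) by blast
  have F1: "(f' has_integral (f b - f a)) {a..b}" by (rule ftc_ac[OF _ ac negN der]) (use ab in simp)
  then have fi: "f' integrable_on {a..b}" by blast
  define h where "h = (b - a) / real n"
  define x where "x i = a + real i * h" for i :: nat
  define c where "c = (f b - f a) / (b - a)"
  define W where "W = integral {a..b} (\<lambda>t. (f' t - c)\<^sup>2)"
  define \<sigma> where "\<sigma> = integral {a..b} (\<lambda>x. (f' x)\<^sup>2) - (f b - f a)\<^sup>2 / (b - a)"
  have np: "real n > 0" using assms(2) by simp
  have hp: "h > 0" unfolding h_def using ab np by simp
  have bn: "a + real n * h = b" unfolding h_def using np by simp
  have xin: "a \<le> x i" "x (Suc i) \<le> b" "x i \<le> x (Suc i)" if "i < n" for i
  proof -
    show "a \<le> x i" unfolding x_def using hp by simp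
    have "real (Suc i) * h \<le> real n * h" using that hp by (intro mult_right_mono) auto
    then show "x (Suc i) \<le> b" unfolding x_def using bn by linarith
    show "x i \<le> x (Suc i)" unfolding x_def using hp by (simp add: algebra_simps)
  qed
  have dx: "x (Suc i) - x i = h" for i unfolding x_def by (simp add: algebra_simps)
  have wint: "(\<lambda>t. (f' t - c)\<^sup>2) integrable_on {a..b}" by (rule sq_integrable[OF fi f2])
  have fint: "f integrable_on {a..b}" by (rule integrable_continuous_real[OF ac_cont[OF ac]])
  have Wsum: "W = (\<Sum>i<n. integral {x i..x (Suc i)} (\<lambda>t. (f' t - c)\<^sup>2))"
    unfolding W_def x_def using partition_integral[of h "\<lambda>t. (f' t - c)\<^sup>2" a n] hp wint bn by simp
  have Fsum: "integral {a..b} f = (\<Sum>i<n. integral {x i..x (Suc i)} f)"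
    unfolding x_def using partition_integral[of h f a n] hp fint bn by simp
  have QS: "quad_S f a b n = (\<Sum>i<n. h / 2 * (f ((3 * x i + x (Suc i)) / 4) + f ((x i + 3 * x (Suc i)) / 4)))"
    unfolding quad_S_def Let_def h_def[symmetric] x_def[symmetric] by (simp add: sum_distrib_left)
  have Rsum: "integral {a..b} f - quad_S f a b n
      = (\<Sum>i<n. integral {x i..x (Suc i)} f - (x (Suc i) - x i) / 2 * (f ((3 * x i + x (Suc i)) / 4) + f ((x i + 3 * x (Suc i)) / 4)))"
    unfolding Fsum QS dx by (simp add: sum_subtractf)
  have bound: "\<bar>integral {a..b} f - quad_S f a b n\<bar> \<le> (\<alpha> * (real n * h^3 / 48) + W / \<alpha>) / 2"
    if \<alpha>: "\<alpha> > 0" for \<alpha>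
  proof -
    have pi: "\<bar>integral {x i..x (Suc i)} f - (x (Suc i) - x i) / 2 * (f ((3 * x i + x (Suc i)) / 4) + f ((x i + 3 * x (Suc i)) / 4))\<bar>
        \<le> (\<alpha> * (h^3 / 48) + integral {x i..x (Suc i)} (\<lambda>t. (f' t - c)\<^sup>2) / \<alpha>) / 2" if i: "i < n" for i
    proof -
      have sub: "{x i..x (Suc i)} \<subseteq> {a..b}" using xin[OF i] by auto
      have "\<bar>integral {x i..x (Suc i)} f - (x (Suc i) - x i) / 2 * (f ((3 * x i + x (Suc i)) / 4) + f ((x i + 3 * x (Suc i)) / 4))\<bar>
        \<le> (\<alpha> * ((x (Suc i) - x i)^3 / 48) + integral {x i..x (Suc i)} (\<lambda>t. (f' t - c)\<^sup>2) / \<alpha>) / 2"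
        by (rule sub_bound[OF ac negN der xin(1)[OF i] xin(3)[OF i] xin(2)[OF i]
              integrable_subinterval_real[OF fi sub] integrable_subinterval_real[OF f2 sub] \<alpha>])
      then show ?thesis unfolding dx .
    qed
    have "\<bar>integral {a..b} f - quad_S f a b n\<bar> \<le> (\<Sum>i<n. \<bar>integral {x i..x (Suc i)} f - (x (Suc i) - x i) / 2 * (f ((3 * x i + x (Suc i)) / 4) + f ((x i + 3 * x (Suc i)) / 4))\<bar>)"
      unfolding Rsum by (rule sum_abs)
    also have "\<dots> \<le> (\<Sum>i<n. (\<alpha> * (h^3 / 48) + integral {x i..x (Suc i)} (\<lambda>t. (f' t - c)\<^sup>2) / \<alpha>) / 2)"
      by (rule sum_mono) (use pi in auto)
    also have "\<dots> = (real n * (\<alpha> * (h^3 / 48)) + W / \<alpha>) / 2"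
      unfolding Wsum A_sum by simp
    finally show ?thesis by (simp add: algebra_simps)
  qed
  have Wnn: "W \<ge> 0" unfolding W_def by (rule integral_nonneg[OF wint]) simp
  have Wsig: "W = \<sigma>"
  proof -
    have HI: "((\<lambda>t. ((f' t)\<^sup>2 - (2*c) * f' t) + c\<^sup>2) has_integral
        ((integral {a..b} (\<lambda>x. (f' x)\<^sup>2) - (2*c) * (f b - f a)) + c\<^sup>2 * (b - a))) {a..b}"
    proof -
      have "((\<lambda>t. c\<^sup>2) has_integral c\<^sup>2 * (b - a)) {a..b}"
        using has_integral_const_real[of "c\<^sup>2" a b] ab by (simp add: mult.commute)
      then show ?thesis
        by (intro has_integral_add has_integral_diff has_integral_mult_right integrable_integral f2 F1)
    qed
    have FE: "(\<lambda>t. ((f' t)\<^sup>2 - (2*c) * f' t) + c\<^sup>2) = (\<lambda>t. (f' t - c)\<^sup>2)"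
      by (auto simp: power2_eq_square algebra_simps)
    have "W = (integral {a..b} (\<lambda>x. (f' x)\<^sup>2) - (2*c) * (f b - f a)) + c\<^sup>2 * (b - a)"
      unfolding W_def by (rule integral_unique[OF HI[unfolded FE]])
    moreover have "(2*c) * (f b - f a) = 2 * ((f b - f a)\<^sup>2 / (b - a))"
      unfolding c_def using ab by (simp add: power2_eq_square)
    moreover have "c\<^sup>2 * (b - a) = (f b - f a)\<^sup>2 / (b - a)"
      unfolding c_def using ab by (simp add: power2_eq_square)
    ultimately show ?thesis unfolding \<sigma>_def by linarith
  qed
  define A where "A = real n * h^3 / 48"
  have Ap: "A > 0" unfolding A_def using np hp by simp
  have main: "\<bar>integral {a..b} f - quad_S f a b n\<bar> \<le> sqrt A * sqrt W"
    by (rule opt[OF Ap Wnn]) (use bound in \<open>simp add: A_def\<close>)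
  define K where "K = (b - a) powr (3/2) / (4 * sqrt 3 * real n)"
  have Kn: "K \<ge> 0" unfolding K_def by simp
  have "K\<^sup>2 = A"
  proof -
    have pp: "((b - a) powr (3/2))\<^sup>2 = (b - a)^3"
    proof -
      have "((b - a) powr (3/2))\<^sup>2 = (b - a) powr (3/2) * (b - a) powr (3/2)" by (simp add: power2_eq_square)
      also have "\<dots> = (b - a) powr 3" using ab by (simp add: powr_add[symmetric])
      also have "\<dots> = (b - a)^3" using ab by (simp add: powr_realpow)
      finally show ?thesis .
    qed
    have "K\<^sup>2 = ((b - a) powr (3/2))\<^sup>2 / (16 * 3 * (real n)\<^sup>2)"
      unfolding K_def by (simp add: power_divide power_mult_distrib)
    also have "\<dots> = A" unfolding pp A_def h_def using np by (simp add: field_simps power3_eq_cube power2_eq_square)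
    finally show ?thesis .
  qed
  then have "sqrt A = K" using Kn by (metis real_sqrt_abs abs_of_nonneg)
  then show ?thesis using main Wsig unfolding K_def \<sigma>_def by simp
qed

end
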